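(* Let $Q\in\mathbb{R}^{n\times n}$ be symmetric nonsingular with eigenvalues $\lambda_1\ge\dots\ge\lambda_{n-1}>0>\lambda_n$ and orthonormal eigenvectors $u_1,\dots,u_n$ ($Qu_i=\lambda_iu_i$), and let $A\in\mathbb{R}^{n\times n}$. If $\eta\in\mathbb{R}$ satisfies $A^TQ+QA-\eta Q\preceq0$, then $$\max_{1\le i\le n-1}u_i^T(A^T+A)u_i\le\eta\le u_n^T(A^T+A)u_n.$$
   Context: $\preceq0$ denotes negative semidefiniteness. *)

theory Defs
  imports "HOL-Analysis.Analysis"
begin

definition neg_semidef :: "real^'n^'n \<Rightarrow> bool" where
  "neg_semidef M \<longleftrightarrow> (\<forall>x. x \<bullet> (M *v x) \<le> 0)"

end

theory Submission
  imports Defs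
begin

lemma key:
  fixes Q A :: "real^'n^'n" and x :: "real^'n"
  assumes sym: "transpose Q = Q" and ev: "Q *v x = l *\<^sub>R x"
  shows "x \<bullet> ((transpose A ** Q + Q ** A - \<eta> *\<^sub>R Q) *v x)
         = l * (x \<bullet> ((transpose A + A) *v x)) - \<eta> * l * (x \<bullet> x)"
proof -
  have t: "x \<bullet> (transpose A *v y) = (A *v x) \<bullet> y" for y :: "real^'n" and A :: "real^'n^'n"
    by (metis dot_lmul_matrix inner_commute transpose_matrix_vector transpose_transpose vector_transpose_matrix)
  have a: "(transpose A ** Q) *v x = l *\<^sub>R (transpose A *v x)"
    by (metis ev matrix_vector_mul_assoc matrix_vector_mult_scaleR)
  have b: "x \<bullet> ((Q ** A) *v x) = l * (x \<bullet> (A *v x))"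
  proof -
    have "x \<bullet> ((Q ** A) *v x) = x \<bullet> (transpose Q *v (A *v x))"
      by (simp add: sym matrix_vector_mul_assoc)
    also have "\<dots> = (Q *v x) \<bullet> (A *v x)" by (rule t)
    finally show ?thesis by (simp add: ev)
  qed
  have c: "x \<bullet> ((\<eta> *\<^sub>R Q) *v x) = \<eta> * l * (x \<bullet> x)"
    by (simp add: scaleR_matrix_vector_assoc[symmetric] ev)
  have d: "x \<bullet> (transpose A *v x) = x \<bullet> (A *v x)"
    by (subst t) (rule inner_commute)
  show ?thesis
    by (simp add: matrix_vector_mult_add_rdistrib matrix_vector_mult_diff_rdistrib
        inner_add_right inner_diff_right a b c d algebra_simps)
qed

theorem corollary3p22:
  fixes Q A :: "real^'n^'n" and lam :: "nat \<Rightarrow> real" and u :: "nat \<Rightarrow> real^'n"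
    and \<eta> :: real
  assumes sym: "transpose Q = Q"
    and nonsing: "invertible Q"
    and eig: "\<And>i. i < CARD('n) \<Longrightarrow> Q *v u i = lam i *\<^sub>R u i"
    and orth: "\<And>i j. i < CARD('n) \<Longrightarrow> j < CARD('n) \<Longrightarrow> u i \<bullet> u j = (if i = j then 1 else 0)"
    and sorted: "\<And>i j. i \<le> j \<Longrightarrow> j < CARD('n) - 1 \<Longrightarrow> lam j \<le> lam i"
    and pos: "\<And>i. i < CARD('n) - 1 \<Longrightarrow> lam i > 0"
    and neg: "lam (CARD('n) - 1) < 0"
    and nsd: "neg_semidef (transpose A ** Q + Q ** A - \<eta> *\<^sub>R Q)"
  shows "(\<forall>i < CARD('n) - 1. u i \<bullet> ((transpose A + A) *v u i) \<le> \<eta>)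
         \<and> \<eta> \<le> u (CARD('n) - 1) \<bullet> ((transpose A + A) *v u (CARD('n) - 1))"
proof -
  have gen: "lam i * (u i \<bullet> ((transpose A + A) *v u i) - \<eta>) \<le> 0" if "i < CARD('n)" for i
  proof -
    have "u i \<bullet> ((transpose A ** Q + Q ** A - \<eta> *\<^sub>R Q) *v u i) \<le> 0"
      using nsd by (simp add: neg_semidef_def)
    moreover have "u i \<bullet> u i = 1" using orth that by simp
    ultimately show ?thesis using key[OF sym eig[OF that], of A \<eta>] by (simp add: algebra_simps)
  qed
  have c: "CARD('n) - 1 < CARD('n)" by simp
  show ?thesis
  proof (intro conjI allI impI)
    fix i assume i: "i < CARD('n) - 1"
    hence "i < CARD('n)" by simp
    from gen[OF this] pos[OF i] show "u i \<bullet> ((transpose A + A) *v u i) \<le> \<eta>"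
      by (simp add: mult_le_0_iff)
  next
    from gen[OF c] neg show "\<eta> \<le> u (CARD('n) - 1) \<bullet> ((transpose A + A) *v u (CARD('n) - 1))"
      by (simp add: mult_le_0_iff)
  qed
qed

end
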